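(* Let $\mathcal{X}$ be a compact subset and $\mathcal{Y}$ a finite subset of a metric space $(\mathcal{S},\eta)$. Then every function $f:\mathcal{X}\to\mathcal{Y}$ is $L$-invertible.
   Context: Hausdorff distance: for nonempty subsets $\mathcal{A},\mathcal{B}$ of $(\mathcal{S},\eta)$, $\mathcal{H}(\mathcal{A},\mathcal{B}):=\max\{\sup_{a\in\mathcal{A}}\inf_{b\in\mathcal{B}}\eta(a,b),\sup_{b\in\mathcal{B}}\inf_{a\in\mathcal{A}}\eta(a,b)\}$. A function $f:\mathcal{X}\to\mathcal{Y}$ is $L$-invertible if there is a constant $L_{f^{-1}}\ge0$ such that $\mathcal{H}(f^{-1}(y^1),f^{-1}(y^2))\le L_{f^{-1}}\,\eta(y^1,y^2)$ for all $y^1,y^2\in f(\mathcal{X})$, where $f^{-1}(y)=\{x\in\mathcal{X}:f(x)=y\}$. *)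

theory Defs
  imports "HOL-Analysis.Analysis"
begin

text \<open>Hausdorff distance between nonempty subsets of a metric space, valued in the
extended reals (the supremum may be infinite in general), exactly as in the paper.\<close>
definition hausdorff_dist :: "'a::metric_space set \<Rightarrow> 'a set \<Rightarrow> ereal" where
  "hausdorff_dist A B =
     max (SUP a\<in>A. ereal (INF b\<in>B. dist a b)) (SUP b\<in>B. ereal (INF a\<in>A. dist a b))"

definition fibre :: "'a set \<Rightarrow> ('a \<Rightarrow> 'b) \<Rightarrow> 'b \<Rightarrow> 'a set" where
  "fibre X f y = {x \<in> X. f x = y}"

definition L_invertible :: "'a::metric_space set \<Rightarrow> ('a \<Rightarrow> 'b::metric_space) \<Rightarrow> bool" where
  "L_invertible X f \<longleftrightarrow> (\<exists>L\<ge>0. \<forall>y1\<in>f ` X. \<forall>y2\<in>f ` X.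
      hausdorff_dist (fibre X f y1) (fibre X f y2) \<le> ereal (L * dist y1 y2))"

end

theory Submission
  imports Defs
begin

lemma hd_le:
  fixes A B :: "'a::metric_space set"
  assumes "A \<noteq> {}" "B \<noteq> {}" "\<And>a b. a \<in> A \<Longrightarrow> b \<in> B \<Longrightarrow> dist a b \<le> D"
  shows "hausdorff_dist A B \<le> ereal D"
proof -
  have 1: "(SUP a\<in>A. ereal (INF b\<in>B. dist a b)) \<le> ereal D"
  proof (rule SUP_least)
    fix a assume a: "a \<in> A"
    obtain b where b: "b \<in> B" using assms(2) by blast
    have "(INF b\<in>B. dist a b) \<le> D"
      by (rule cINF_lower2[OF _ b]) (auto intro: bdd_belowI[where m=0] assms(3) a b)
    then show "ereal (INF b\<in>B. dist a b) \<le> ereal D" by simp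
  qed
  have 2: "(SUP b\<in>B. ereal (INF a\<in>A. dist a b)) \<le> ereal D"
  proof (rule SUP_least)
    fix b assume b: "b \<in> B"
    obtain a where a: "a \<in> A" using assms(1) by blast
    have "(INF a\<in>A. dist a b) \<le> D"
      by (rule cINF_lower2[OF _ a]) (auto intro: bdd_belowI[where m=0] assms(3) a b)
    then show "ereal (INF a\<in>A. dist a b) \<le> ereal D" by simp
  qed
  show ?thesis using 1 2 unfolding hausdorff_dist_def by simp
qed

lemma hd_self:
  fixes A :: "'a::metric_space set"
  shows "hausdorff_dist A A \<le> 0"
proof -
  have 1: "(SUP a\<in>A. ereal (INF b\<in>A. dist a b)) \<le> 0"
  proof (rule SUP_least)
    fix a assume a: "a \<in> A"
    have "(INF b\<in>A. dist a b) \<le> 0"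
      by (rule cINF_lower2[OF _ a]) (auto intro: bdd_belowI[where m=0])
    then show "ereal (INF b\<in>A. dist a b) \<le> 0" by (simp add: zero_ereal_def)
  qed
  have 2: "(SUP b\<in>A. ereal (INF a\<in>A. dist a b)) \<le> 0"
  proof (rule SUP_least)
    fix b assume b: "b \<in> A"
    have "(INF a\<in>A. dist a b) \<le> 0"
      by (rule cINF_lower2[OF _ b]) (auto intro: bdd_belowI[where m=0])
    then show "ereal (INF a\<in>A. dist a b) \<le> 0" by (simp add: zero_ereal_def)
  qed
  show ?thesis using 1 2 unfolding hausdorff_dist_def by simp
qed

theorem lemma5:
  fixes X Y :: "'a::metric_space set" and f :: "'a \<Rightarrow> 'a"
  assumes "compact X" and "finite Y" and "f ` X \<subseteq> Y"
  shows "L_invertible X f"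
proof -
  obtain x0 e where e: "\<And>y. y \<in> X \<Longrightarrow> dist x0 y \<le> e"
    using compact_imp_bounded[OF assms(1)] unfolding bounded_def by blast
  define D where "D = max 0 (2 * e)"
  have Dx: "dist a b \<le> D" if "a \<in> X" "b \<in> X" for a b
  proof -
    have "dist a b \<le> dist x0 a + dist x0 b" by (metis dist_commute dist_triangle)
    also have "\<dots> \<le> 2 * e" using e[OF that(1)] e[OF that(2)] by linarith
    finally show ?thesis unfolding D_def by simp
  qed
  have D0: "D \<ge> 0" unfolding D_def by simp
  define S where "S = {1 / dist y1 y2 | y1 y2. y1 \<in> f ` X \<and> y2 \<in> f ` X \<and> y1 \<noteq> y2}"
  have fin: "finite (f ` X)" using assms(2,3) finite_subset by blast
  have "S \<subseteq> (\<lambda>(y1,y2). 1 / dist y1 y2) ` (f ` X \<times> f ` X)" unfolding S_def by auto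
  hence finS: "finite S" using fin finite_subset by blast
  define M where "M = Max (insert 0 S)"
  have M0: "M \<ge> 0" unfolding M_def using finS by simp
  have MS: "s \<le> M" if "s \<in> S" for s unfolding M_def using finS that by simp
  show ?thesis unfolding L_invertible_def
  proof (intro exI[of _ "D * M"] conjI ballI)
    show "0 \<le> D * M" using D0 M0 by simp
    fix y1 y2 assume y1: "y1 \<in> f ` X" and y2: "y2 \<in> f ` X"
    show "hausdorff_dist (fibre X f y1) (fibre X f y2) \<le> ereal (D * M * dist y1 y2)"
    proof (cases "y1 = y2")
      case True
      then show ?thesis using hd_self by (simp add: zero_ereal_def)
    next
      case False
      have "1 / dist y1 y2 \<in> S" unfolding S_def using y1 y2 False by blast
      hence "1 / dist y1 y2 \<le> M" by (rule MS)
      moreover have "dist y1 y2 > 0" using False by simp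
      ultimately have "1 \<le> M * dist y1 y2" by (simp add: field_simps)
      hence "D * 1 \<le> D * (M * dist y1 y2)" using D0 by (rule mult_left_mono)
      hence DD: "D \<le> D * M * dist y1 y2" by (simp add: mult.assoc)
      have "hausdorff_dist (fibre X f y1) (fibre X f y2) \<le> ereal D"
        by (rule hd_le) (use y1 y2 Dx in \<open>auto simp: fibre_def\<close>)
      also have "\<dots> \<le> ereal (D * M * dist y1 y2)" using DD by simp
      finally show ?thesis .
    qed
  qed
qed

end
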